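(* $\mathcal{B}_f(H)$ is not Polishable in either the norm topology or the strong operator topology; that is, there is no Polish group topology on the additive group $\mathcal{B}_f(H)$ whose Borel sets coincide with the Borel sets induced on $\mathcal{B}_f(H)$ by the operator norm topology, nor one whose Borel sets coincide with those induced by the strong operator topology.
   Context: $H$ is a fixed infinite-dimensional separable complex Hilbert space, $\mathcal{B}(H)$ its bounded operators, and $\mathcal{B}_f(H)$ the finite-rank operators. The strong operator topology is the topology of pointwise norm convergence on $H$. *)

theory Defs
  imports "HOL-Analysis.Analysis"
begin

text \<open>A complex Hilbert space is modelled as a real Hilbert space (type of class
  real_inner and banach) together with a complex structure J (multiplication by i):
  a real-linear isometry with J (J x) = - x. Complex scalar multiplication is
  (a + b i) x = a x + b J x and the complex inner product is
  inner x y + i inner x (J y); every complex Hilbert space arises this way.\<close>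

definition complex_structure :: "('h::real_inner \<Rightarrow> 'h) \<Rightarrow> bool" where
  "complex_structure J \<longleftrightarrow> linear J \<and> (\<forall>x. J (J x) = - x) \<and> (\<forall>x. norm (J x) = norm x)"

definition infinite_dimensional :: "'h::real_vector itself \<Rightarrow> bool" where
  "infinite_dimensional _ \<longleftrightarrow> \<not> (\<exists>S::'h set. finite S \<and> span S = UNIV)"

definition separable_type :: "'h::topological_space itself \<Rightarrow> bool" where
  "separable_type _ \<longleftrightarrow> (\<exists>D::'h set. countable D \<and> closure D = UNIV)"

text \<open>Bounded complex-linear operators: bounded real-linear maps commuting with J.\<close>
definition bounded_ops :: "('h::real_normed_vector \<Rightarrow> 'h) \<Rightarrow> ('h \<Rightarrow>\<^sub>L 'h) set" where
  "bounded_ops J = {T. \<forall>x. blinfun_apply T (J x) = J (blinfun_apply T x)}"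

definition finite_rank_ops :: "('h::real_normed_vector \<Rightarrow> 'h) \<Rightarrow> ('h \<Rightarrow>\<^sub>L 'h) set" where
  "finite_rank_ops J = {T \<in> bounded_ops J. \<exists>S. finite S \<and> range (blinfun_apply T) \<subseteq> span S}"

definition borel_sets_of :: "'a topology \<Rightarrow> 'a set set" where
  "borel_sets_of X = sigma_sets (topspace X) (Collect (openin X))"

definition Polish_topology :: "'a topology \<Rightarrow> bool" where
  "Polish_topology X \<longleftrightarrow> completely_metrizable_space X \<and> separable_space X"

definition Polish_group_topology :: "'a::ab_group_add set \<Rightarrow> 'a topology \<Rightarrow> bool" where
  "Polish_group_topology G X \<longleftrightarrow> topspace X = G \<and> Polish_topology X
     \<and> continuous_map (prod_topology X X) X (\<lambda>(x, y). x + y)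
     \<and> continuous_map X X uminus"

definition Polishable :: "'a::ab_group_add set \<Rightarrow> 'a topology \<Rightarrow> bool" where
  "Polishable G Y \<longleftrightarrow> (\<exists>X. Polish_group_topology G X \<and> borel_sets_of X = borel_sets_of Y)"

end

theory Submission
  imports Defs
begin


definition meagre :: "'a topology \<Rightarrow> 'a set \<Rightarrow> bool" where
  "meagre X A \<longleftrightarrow> (\<exists>M. countable M \<and> (\<forall>C\<in>M. closedin X C \<and> X interior_of C = {}) \<and> A \<subseteq> \<Union>M)"

lemma meagre_subset: "meagre X A \<Longrightarrow> B \<subseteq> A \<Longrightarrow> meagre X B"
  unfolding meagre_def by (meson order_trans)

lemma meagre_empty: "meagre X {}"
  unfolding meagre_def by (rule exI[of _ "{}"]) simp

lemma meagre_Un: "meagre X A \<Longrightarrow> meagre X B \<Longrightarrow> meagre X (A \<union> B)"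
  unfolding meagre_def
proof (elim exE conjE)
  fix M N assume "countable M" "\<forall>C\<in>M. closedin X C \<and> X interior_of C = {}" "A \<subseteq> \<Union>M"
    "countable N" "\<forall>C\<in>N. closedin X C \<and> X interior_of C = {}" "B \<subseteq> \<Union>N"
  then show "\<exists>M. countable M \<and> (\<forall>C\<in>M. closedin X C \<and> X interior_of C = {}) \<and> A \<union> B \<subseteq> \<Union>M"
    by (intro exI[of _ "M \<union> N"]) auto
qed

lemma meagre_UN: assumes "\<And>n::nat. meagre X (A n)" shows "meagre X (\<Union>n. A n)"
proof -
  from assms obtain M where M: "\<And>n. countable (M n) \<and> (\<forall>C\<in>M n. closedin X C \<and> X interior_of C = {}) \<and> A n \<subseteq> \<Union>(M n)"
    unfolding meagre_def by metis
  show ?thesis unfolding meagre_def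
  proof (rule exI[of _ "\<Union>n. M n"], intro conjI)
    show "countable (\<Union>n. M n)" using M by (simp add: countable_UN)
    show "\<forall>C\<in>\<Union>n. M n. closedin X C \<and> X interior_of C = {}" using M by blast
    show "(\<Union>n. A n) \<subseteq> \<Union>(\<Union>n. M n)"
    proof
      fix x assume "x \<in> (\<Union>n. A n)"
      then obtain n where "x \<in> A n" by blast
      then obtain C where "C \<in> M n" "x \<in> C" using M by blast
      thus "x \<in> \<Union>(\<Union>n. M n)" by blast
    qed
  qed
qed

lemma meagre_open_empty:
  assumes "completely_metrizable_space X" "openin X V" "meagre X V" shows "V = {}"
proof -
  from assms(3) obtain M where M: "countable M" "\<And>C. C\<in>M \<Longrightarrow> closedin X C \<and> X interior_of C = {}" "V \<subseteq> \<Union>M"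
    unfolding meagre_def by blast
  have "X interior_of \<Union>M = {}"
    using Baire_category_alt[of X M] assms(1) M by blast
  moreover have "V \<subseteq> X interior_of \<Union>M"
    using interior_of_maximal[OF M(3) assms(2)] .
  ultimately show ?thesis by blast
qed

lemma meagre_frontier:
  assumes "openin X U" shows "meagre X (X frontier_of U)"
proof -
  have "X interior_of (X frontier_of U) = {}"
  proof (rule ccontr)
    assume "X interior_of (X frontier_of U) \<noteq> {}"
    then obtain x where x: "x \<in> X interior_of (X frontier_of U)" by blast
    have fr: "X frontier_of U = X closure_of U - U" using frontier_of_openin[OF assms] .
    have op: "openin X (X interior_of (X frontier_of U))" by simp
    have "X interior_of (X frontier_of U) \<subseteq> X closure_of U"
      using interior_of_subset[of X "X frontier_of U"] fr by blast
    hence "X interior_of (X frontier_of U) \<inter> X closure_of U \<noteq> {}" using x by blast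
    hence "X interior_of (X frontier_of U) \<inter> U \<noteq> {}"
      using openin_Int_closure_of_eq_empty[OF op] by blast
    moreover have "X interior_of (X frontier_of U) \<inter> U = {}"
      using interior_of_subset[of X "X frontier_of U"] fr by blast
    ultimately show False by blast
  qed
  then show ?thesis unfolding meagre_def
    by (intro exI[of _ "{X frontier_of U}"]) (auto simp: closedin_frontier_of)
qed

lemma meagre_preimage:
  assumes f: "continuous_map X X f" and g: "continuous_map X X g"
    and fg: "\<And>x. x \<in> topspace X \<Longrightarrow> g (f x) = x \<and> f (g x) = x"
    and m: "meagre X A"
  shows "meagre X {x \<in> topspace X. f x \<in> A}"
proof -
  from m obtain M where M: "countable M" "\<And>C. C\<in>M \<Longrightarrow> closedin X C \<and> X interior_of C = {}" "A \<subseteq> \<Union>M"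
    unfolding meagre_def by blast
  let ?M = "(\<lambda>C. {x \<in> topspace X. f x \<in> C}) ` M"
  have "\<forall>D\<in>?M. closedin X D \<and> X interior_of D = {}"
  proof
    fix D assume "D \<in> ?M"
    then obtain C where C: "C \<in> M" "D = {x \<in> topspace X. f x \<in> C}" by blast
    have "closedin X D" using closedin_continuous_map_preimage[OF f] M(2)[OF C(1)] C(2) by simp
    moreover have "X interior_of D = {}"
    proof (rule ccontr)
      assume "X interior_of D \<noteq> {}"
      then obtain v where v: "v \<in> X interior_of D" by blast
      let ?V = "X interior_of D"
      have vt: "v \<in> topspace X" using v by (metis interior_of_subset_topspace subsetD)
      have "openin X {y \<in> topspace X. g y \<in> ?V}"
        using openin_continuous_map_preimage[OF g] by simp
      moreover have "{y \<in> topspace X. g y \<in> ?V} \<subseteq> C"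
      proof
        fix y assume y: "y \<in> {y \<in> topspace X. g y \<in> ?V}"
        hence "g y \<in> D" using interior_of_subset[of X D] by auto
        hence "f (g y) \<in> C" using C(2) by blast
        thus "y \<in> C" using fg y by auto
      qed
      ultimately have "{y \<in> topspace X. g y \<in> ?V} \<subseteq> X interior_of C"
        using interior_of_maximal by metis
      moreover have "f v \<in> {y \<in> topspace X. g y \<in> ?V}"
      proof -
        have "f v \<in> topspace X" using continuous_map_image_subset_topspace[OF f] vt by blast
        thus ?thesis using fg[OF vt] v by simp
      qed
      ultimately have "f v \<in> X interior_of C" by (rule subsetD)
      thus False using M(2)[OF C(1)] by simp
    qed
    ultimately show "closedin X D \<and> X interior_of D = {}" ..
  qed
  moreover have "{x \<in> topspace X. f x \<in> A} \<subseteq> \<Union>?M" using M(3) by auto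
  moreover have "countable ?M" using M(1) by simp
  ultimately show ?thesis unfolding meagre_def by (intro exI[of _ ?M]) simp
qed

definition baire_prop :: "'a topology \<Rightarrow> 'a set \<Rightarrow> bool" where
  "baire_prop X A \<longleftrightarrow> (\<exists>U. openin X U \<and> meagre X ((A - U) \<union> (U - A)))"

lemma baire_prop_sigma:
  assumes "A \<in> sigma_sets (topspace X) (Collect (openin X))"
  shows "baire_prop X A"
  using assms
proof (induction rule: sigma_sets.induct)
  case (Basic a)
  then show ?case unfolding baire_prop_def by (intro exI[of _ a]) (auto simp: meagre_empty)
next
  case Empty
  then show ?case unfolding baire_prop_def by (intro exI[of _ "{}"]) (auto simp: meagre_empty)
next
  case (Compl a)
  then obtain U where U: "openin X U" "meagre X ((a - U) \<union> (U - a))" unfolding baire_prop_def by blast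
  let ?U = "topspace X - X closure_of U"
  have "openin X ?U" by (simp add: openin_diff)
  moreover have "((topspace X - a) - ?U) \<union> (?U - (topspace X - a)) \<subseteq> ((a - U) \<union> (U - a)) \<union> X frontier_of U"
    using frontier_of_openin[OF U(1)] closure_of_subset[OF openin_subset[OF U(1)]] by blast
  moreover have "meagre X (((a - U) \<union> (U - a)) \<union> X frontier_of U)"
    using meagre_Un[OF U(2) meagre_frontier[OF U(1)]] .
  ultimately show ?case unfolding baire_prop_def
    by (intro exI[of _ ?U] conjI) (auto intro: meagre_subset)
next
  case (Union a)
  then obtain U where U: "\<And>i. openin X (U i) \<and> meagre X ((a i - U i) \<union> (U i - a i))"
    unfolding baire_prop_def by (metis (no_types))
  have "openin X (\<Union>i. U i)" using U by (intro openin_Union) auto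
  moreover have "meagre X (\<Union>i. (a i - U i) \<union> (U i - a i))" using U by (intro meagre_UN) simp
  moreover have "((\<Union>i. a i) - (\<Union>i. U i)) \<union> ((\<Union>i. U i) - (\<Union>i. a i)) \<subseteq> (\<Union>i. (a i - U i) \<union> (U i - a i))"
    by blast
  ultimately show ?case unfolding baire_prop_def
    by (intro exI[of _ "\<Union>i. U i"] conjI) (auto intro: meagre_subset)
qed



lemma polish_contra:
  fixes X :: "'a::ab_group_add topology" and F :: "nat \<Rightarrow> 'a set"
  assumes PG: "Polish_group_topology G X"
    and Fb: "\<And>n. F n \<inter> G \<in> sigma_sets G (Collect (openin X))"
    and cov: "G \<subseteq> (\<Union>n. F n)"
    and diff: "\<And>a b x y. x \<in> F a \<Longrightarrow> y \<in> F b \<Longrightarrow> x - y \<in> F (a + b)"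
    and big: "\<And>N. \<exists>f::real \<Rightarrow> 'a. (\<forall>\<alpha>. f \<alpha> \<in> G) \<and> (\<forall>\<alpha> \<beta>. \<alpha> \<noteq> \<beta> \<longrightarrow> f \<alpha> - f \<beta> \<notin> F N)"
  shows False
proof -
  have top: "topspace X = G" and cms: "completely_metrizable_space X" and sep: "separable_space X"
    and addc: "continuous_map (prod_topology X X) X (\<lambda>(x, y). x + y)"
    and negc: "continuous_map X X uminus"
    using PG unfolding Polish_group_topology_def Polish_topology_def by auto
  have addG: "x + y \<in> G" if "x \<in> G" "y \<in> G" for x y
  proof -
    have "(x, y) \<in> topspace (prod_topology X X)" using that top by (simp add: topspace_prod_topology)
    hence "(\<lambda>(x, y). x + y) (x, y) \<in> topspace X" using continuous_map_image_subset_topspace[OF addc] by blast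
    thus ?thesis using top by simp
  qed
  have negG: "- x \<in> G" if "x \<in> G" for x
    using continuous_map_image_subset_topspace[OF negc] that top by blast
  obtain f0 :: "real \<Rightarrow> 'a" where "\<forall>\<alpha>. f0 \<alpha> \<in> G" using big by blast
  hence zeroG: "0 \<in> G" using addG[OF _ negG, of "f0 0" "f0 0"] by simp
  have transl: "continuous_map X X (\<lambda>x. x + c)" if "c \<in> G" for c
  proof -
    have "continuous_map X (prod_topology X X) (\<lambda>x. (x, c))"
      using that top by (auto simp: continuous_map_pairwise o_def)
    from continuous_map_compose[OF this addc] show ?thesis by (simp add: o_def)
  qed
  have refl: "continuous_map X X (\<lambda>x. c - x)" if "c \<in> G" for c
  proof -
    have "continuous_map X X (\<lambda>x. (- x) + c)"
      using continuous_map_compose[OF negc transl[OF that]] by (simp add: o_def)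
    thus ?thesis by (simp add: algebra_simps)
  qed
  have bp: "baire_prop X (F n \<inter> G)" for n
    using baire_prop_sigma[of "F n \<inter> G" X] Fb top by simp
  then obtain U where U: "\<And>n. openin X (U n)" "\<And>n. meagre X (((F n \<inter> G) - U n) \<union> (U n - (F n \<inter> G)))"
    unfolding baire_prop_def by metis
  have "\<exists>n. U n \<noteq> {}"
  proof (rule ccontr)
    assume "\<not> (\<exists>n. U n \<noteq> {})"
    hence "\<And>n. meagre X (F n \<inter> G)" using U(2) by simp
    hence "meagre X (\<Union>n. F n \<inter> G)" by (rule meagre_UN)
    moreover have "(\<Union>n. F n \<inter> G) = G" using cov by blast
    ultimately have "G = {}" using meagre_open_empty[OF cms, of G] top by (metis openin_topspace)
    thus False using zeroG by blast
  qed
  then obtain n u where u: "u \<in> U n" by blast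
  let ?A = "F n \<inter> G" and ?U = "U n" and ?M = "((F n \<inter> G) - U n) \<union> (U n - (F n \<inter> G))"
  have UG: "U n \<subseteq> G" using openin_subset[OF U(1)] top by simp
  have uG: "u \<in> G" using u UG by blast
  define W where "W = {g \<in> G. g + u \<in> U n}"
  have Wo: "openin X W" unfolding W_def using openin_continuous_map_preimage[OF transl[OF uG] U(1)] top by simp
  have W0: "0 \<in> W" unfolding W_def using zeroG u by simp
  have WF: "W \<subseteq> F (n + n)"
  proof
    fix g assume g: "g \<in> W"
    hence gG: "g \<in> G" unfolding W_def by blast
    define Og where "Og = {x \<in> G. x \<in> U n \<and> x + - g \<in> U n}"
    have "openin X {x \<in> topspace X. x + - g \<in> U n}"
      using openin_continuous_map_preimage[OF transl[OF negG[OF gG]] U(1)] .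
    moreover have "Og = U n \<inter> {x \<in> topspace X. x + - g \<in> U n}" unfolding Og_def using UG top by blast
    ultimately have Oo: "openin X Og" using U(1)[of n] by (simp add: openin_Int)
    have "g + u \<in> Og" unfolding Og_def using g u by (auto simp: W_def addG uG gG)
    hence One: "Og \<noteq> {}" by blast
    show "g \<in> F (n + n)"
    proof (rule ccontr)
      assume ng: "g \<notin> F (n + n)"
      have "Og \<subseteq> ?M \<union> {x \<in> topspace X. x + - g \<in> ?M}"
      proof
        fix x assume x: "x \<in> Og"
        have xG: "x \<in> G" using x Og_def by blast
        show "x \<in> ?M \<union> {x \<in> topspace X. x + - g \<in> ?M}"
        proof (cases "x \<in> F n \<and> x + - g \<in> F n")
          case True
          hence "x - (x + - g) \<in> F (n + n)" using diff[of x n "x + - g" n] by simp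
          thus ?thesis using ng by simp
        next
          case False
          have "x + - g \<in> G" using addG[OF xG negG[OF gG]] .
          moreover have "x \<in> U n" "x + - g \<in> U n" using x unfolding Og_def by auto
          ultimately show ?thesis using False xG top by blast
        qed
      qed
      moreover have "meagre X (?M \<union> {x \<in> topspace X. x + - g \<in> ?M})"
      proof (rule meagre_Un[OF U(2)], rule meagre_preimage[OF transl[OF negG[OF gG]] transl[OF gG] _ U(2)])
        fix x show "x + - g + g = x \<and> x + g + - g = x" by simp
      qed
      ultimately have "meagre X Og" by (rule meagre_subset[rotated])
      thus False using meagre_open_empty[OF cms Oo] One by blast
    qed
  qed
  obtain D where D: "countable D" "D \<subseteq> G" "X closure_of D = G"
    using sep top unfolding separable_space_def by auto
  have cover: "\<exists>d\<in>D. T - d \<in> W" if T: "T \<in> G" for T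
  proof -
    let ?V = "{d \<in> topspace X. T - d \<in> W}"
    have Vo: "openin X ?V" using openin_continuous_map_preimage[OF refl[OF T] Wo] .
    have "T \<in> ?V" using T top W0 by simp
    hence "?V \<inter> X closure_of D \<noteq> {}" using D(3) T by blast
    hence "?V \<inter> D \<noteq> {}" using openin_Int_closure_of_eq_empty[OF Vo] by blast
    thus ?thesis by blast
  qed
  obtain f :: "real \<Rightarrow> 'a" where f: "\<forall>\<alpha>. f \<alpha> \<in> G" "\<forall>\<alpha> \<beta>. \<alpha> \<noteq> \<beta> \<longrightarrow> f \<alpha> - f \<beta> \<notin> F ((n + n) + (n + n))"
    using big by blast
  define h where "h \<alpha> = (SOME d. d \<in> D \<and> f \<alpha> - d \<in> W)" for \<alpha>
  have h: "h \<alpha> \<in> D \<and> f \<alpha> - h \<alpha> \<in> W" for \<alpha>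
    unfolding h_def by (rule someI_ex) (use cover f in blast)
  have "\<not> inj h"
  proof
    assume "inj h"
    moreover have "countable (h ` UNIV)" using h D(1) countable_subset by (metis image_subsetI)
    ultimately have "countable (UNIV :: real set)" using countable_image_inj_on[of h UNIV] by blast
    thus False using uncountable_UNIV_real by blast
  qed
  then obtain \<alpha> \<beta> where ab: "\<alpha> \<noteq> \<beta>" "h \<alpha> = h \<beta>" unfolding inj_def by blast
  have "(f \<alpha> - h \<alpha>) - (f \<beta> - h \<beta>) \<in> F ((n + n) + (n + n))"
    using diff[of "f \<alpha> - h \<alpha>" "n+n" "f \<beta> - h \<beta>" "n+n"] WF h by blast
  moreover have "(f \<alpha> - h \<alpha>) - (f \<beta> - h \<beta>) = f \<alpha> - f \<beta>" using ab by simp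
  ultimately show False using f(2) ab(1) by auto
qed



definition Fr :: "nat \<Rightarrow> ('h::real_normed_vector \<Rightarrow>\<^sub>L 'h) set" where
  "Fr n = {T. \<exists>S. finite S \<and> card S \<le> n \<and> range (blinfun_apply T) \<subseteq> span S}"

lemma Fr_diff:
  assumes "x \<in> Fr a" "y \<in> Fr b" shows "x - y \<in> Fr (a + b)"
proof -
  obtain S1 where S1: "finite S1" "card S1 \<le> a" "range (blinfun_apply x) \<subseteq> span S1"
    using assms(1) unfolding Fr_def by blast
  obtain S2 where S2: "finite S2" "card S2 \<le> b" "range (blinfun_apply y) \<subseteq> span S2"
    using assms(2) unfolding Fr_def by blast
  have "card (S1 \<union> S2) \<le> a + b" using card_Un_le[of S1 S2] S1(2) S2(2) by linarith
  moreover have "range (blinfun_apply (x - y)) \<subseteq> span (S1 \<union> S2)"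
  proof
    fix z assume "z \<in> range (blinfun_apply (x - y))"
    then obtain t where t: "z = blinfun_apply x t - blinfun_apply y t" by (auto simp: blinfun.diff_left)
    have "blinfun_apply x t \<in> span (S1 \<union> S2)" using S1(3) span_mono[of S1 "S1 \<union> S2"] by blast
    moreover have "blinfun_apply y t \<in> span (S1 \<union> S2)" using S2(3) span_mono[of S2 "S1 \<union> S2"] by blast
    ultimately show "z \<in> span (S1 \<union> S2)" using t span_diff by blast
  qed
  ultimately show ?thesis unfolding Fr_def using S1(1) S2(1) by blast
qed

lemma Fr_cover: "finite_rank_ops J \<subseteq> (\<Union>n. Fr n)"
  unfolding finite_rank_ops_def Fr_def by blast

lemma Fr_scale: assumes "c \<noteq> 0" "c *\<^sub>R T \<in> Fr n" shows "T \<in> Fr n"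
proof -
  obtain S where S: "finite S" "card S \<le> n" "range (blinfun_apply (c *\<^sub>R T)) \<subseteq> span S"
    using assms(2) unfolding Fr_def by blast
  have "range (blinfun_apply T) \<subseteq> span S"
  proof
    fix z assume "z \<in> range (blinfun_apply T)"
    then obtain t where t: "z = blinfun_apply T t" by blast
    have "c *\<^sub>R blinfun_apply T t \<in> span S" using S(3) by (auto simp: blinfun.scaleR_left)
    hence "(1/c) *\<^sub>R (c *\<^sub>R blinfun_apply T t) \<in> span S" by (rule span_scale)
    thus "z \<in> span S" using t assms(1) by simp
  qed
  thus ?thesis unfolding Fr_def using S by blast
qed

definition orthonormal_set :: "'h::real_inner set \<Rightarrow> bool" where
  "orthonormal_set E \<longleftrightarrow> (\<forall>e\<in>E. inner e e = 1) \<and> (\<forall>e\<in>E. \<forall>e'\<in>E. e \<noteq> e' \<longrightarrow> inner e e' = 0)"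

lemma orthonormal_independent:
  assumes "orthonormal_set (E::'h::real_inner set)" shows "independent E"
proof (rule pairwise_orthogonal_independent)
  show "pairwise orthogonal E" using assms unfolding orthonormal_set_def pairwise_def orthogonal_def by blast
  show "0 \<notin> E" using assms unfolding orthonormal_set_def by fastforce
qed

lemma ortho_step:
  fixes E :: "'h::real_inner set"
  assumes "finite E" "orthonormal_set E" "v \<notin> span E"
  shows "\<exists>w. w \<noteq> 0 \<and> (\<forall>e\<in>E. inner w e = 0) \<and> v - w \<in> span E"
proof -
  define s where "s = (\<Sum>e\<in>E. inner v e *\<^sub>R e)"
  have s_span: "s \<in> span E" unfolding s_def
    by (intro span_sum span_scale span_base)
  have "inner (v - s) e' = 0" if e': "e' \<in> E" for e'
  proof -
    have "inner s e' = (\<Sum>e\<in>E. inner v e * inner e e')"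
      unfolding s_def by (simp add: inner_sum_left)
    also have "\<dots> = (\<Sum>e\<in>E. if e = e' then inner v e' else 0)"
      using assms(2) e' unfolding orthonormal_set_def by (intro sum.cong) auto
    also have "\<dots> = inner v e'" using assms(1) e' by simp
    finally show ?thesis by (simp add: inner_diff_left)
  qed
  moreover have "v - s \<noteq> 0" using s_span assms(3) by auto
  moreover have "v - (v - s) \<in> span E" using s_span by simp
  ultimately show ?thesis by blast
qed

lemma ortho_exists:
  fixes V :: "'h::real_inner set"
  assumes V: "subspace V" and big: "\<And>S. finite S \<Longrightarrow> card S \<le> n \<Longrightarrow> \<not> V \<subseteq> span S"
  shows "\<exists>E. finite E \<and> card E = Suc n \<and> E \<subseteq> V \<and> orthonormal_set E"
proof -
  have "k \<le> Suc n \<Longrightarrow> \<exists>E. finite E \<and> card E = k \<and> E \<subseteq> V \<and> orthonormal_set E" for k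
  proof (induction k)
    case 0
    show ?case by (intro exI[of _ "{}"]) (simp add: orthonormal_set_def)
  next
    case (Suc k)
    then obtain E where E: "finite E" "card E = k" "E \<subseteq> V" "orthonormal_set E" by auto
    have "\<not> V \<subseteq> span E" using big[OF E(1)] E(2) Suc.prems by simp
    then obtain v where v: "v \<in> V" "v \<notin> span E" by blast
    obtain w where w: "w \<noteq> 0" "\<forall>e\<in>E. inner w e = 0" "v - w \<in> span E"
      using ortho_step[OF E(1) E(4) v(2)] by blast
    have spV: "span E \<subseteq> V" using span_minimal[OF E(3) V] .
    have wV: "w \<in> V" using subspace_diff[OF V v(1), of "v - w"] w(3) spV by auto
    define e where "e = w /\<^sub>R norm w"
    have eV: "e \<in> V" unfolding e_def using subspace_scale[OF V wV] by simp
    have ee: "inner e e = 1" unfolding e_def using w(1)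
      by (simp add: power2_norm_eq_inner[symmetric] power2_eq_square)
    have eE: "\<forall>e'\<in>E. inner e e' = 0" unfolding e_def using w(2) by simp
    have enE: "e \<notin> E" using ee eE by auto
    have "orthonormal_set (insert e E)"
      using E(4) ee eE unfolding orthonormal_set_def by (auto simp: inner_commute)
    moreover have "card (insert e E) = Suc k" using E(1,2) enE by simp
    ultimately show ?case using E(1,3) eV by (intro exI[of _ "insert e E"]) auto
  qed
  thus ?thesis by blast
qed

lemma perturb:
  fixes v w :: "nat \<Rightarrow> 'h::real_inner"
  assumes vo: "\<And>i j. i \<le> n \<Longrightarrow> j \<le> n \<Longrightarrow> inner (v i) (v j) = (if i = j then 1 else 0)"
    and close: "\<And>i. i \<le> n \<Longrightarrow> norm (w i - v i) < 1 / (real n + 2)"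
    and ws: "\<And>i. i \<le> n \<Longrightarrow> w i \<in> span S" and S: "finite S" "card S \<le> n"
  shows False
proof -
  have fam: "\<forall>i\<le>n. c i = 0" if c: "(\<Sum>i\<le>n. c i *\<^sub>R w i) = 0" for c
  proof (rule ccontr)
    assume "\<not> (\<forall>i\<le>n. c i = 0)"
    then obtain i0 where i0: "i0 \<le> n" "c i0 \<noteq> 0" by blast
    define m where "m = Max ((\<lambda>i. \<bar>c i\<bar>) ` {..n})"
    have "m \<in> (\<lambda>i. \<bar>c i\<bar>) ` {..n}" unfolding m_def by (intro Max_in) auto
    then obtain j where j: "j \<le> n" "\<bar>c j\<bar> = m" by auto
    have cj: "\<bar>c i\<bar> \<le> \<bar>c j\<bar>" if "i \<le> n" for i
    proof -
      have "\<bar>c i\<bar> \<le> m" unfolding m_def by (rule Max_ge) (use that in auto)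
      thus ?thesis using j(2) by simp
    qed
    have cj0: "\<bar>c j\<bar> > 0" using cj[OF i0(1)] i0(2) by linarith
    have nv: "norm (v j) = 1" using vo[OF j(1) j(1)] by (simp add: norm_eq_sqrt_inner)
    define R where "R = (\<Sum>i\<le>n. c i * inner (w i - v i) (v j))"
    have "0 = inner (\<Sum>i\<le>n. c i *\<^sub>R w i) (v j)" using c by simp
    also have "\<dots> = (\<Sum>i\<le>n. c i * inner (v i) (v j)) + R"
      unfolding R_def by (simp add: inner_sum_left inner_diff_left sum.distrib[symmetric] algebra_simps)
    also have "(\<Sum>i\<le>n. c i * inner (v i) (v j)) = (\<Sum>i\<le>n. if i = j then c j else 0)"
      using vo j(1) by (intro sum.cong) auto
    also have "\<dots> = c j" using j(1) by simp
    finally have cR: "c j = - R" by linarith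
    have "\<bar>R\<bar> \<le> (\<Sum>i\<le>n. \<bar>c i * inner (w i - v i) (v j)\<bar>)" unfolding R_def by (rule sum_abs)
    also have "\<dots> \<le> (\<Sum>i\<le>n. \<bar>c j\<bar> * (1 / (real n + 2)))"
    proof (intro sum_mono)
      fix i assume "i \<in> {..n}"
      hence i: "i \<le> n" by simp
      have "\<bar>inner (w i - v i) (v j)\<bar> \<le> norm (w i - v i) * norm (v j)" by (rule Cauchy_Schwarz_ineq2)
      also have "\<dots> \<le> 1 / (real n + 2)" using close[OF i] nv by simp
      finally have a: "\<bar>inner (w i - v i) (v j)\<bar> \<le> 1 / (real n + 2)" .
      have "\<bar>c i * inner (w i - v i) (v j)\<bar> = \<bar>c i\<bar> * \<bar>inner (w i - v i) (v j)\<bar>" by (simp add: abs_mult)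
      also have "\<dots> \<le> \<bar>c j\<bar> * (1 / (real n + 2))"
        by (intro mult_mono cj[OF i] a) auto
      finally show "\<bar>c i * inner (w i - v i) (v j)\<bar> \<le> \<bar>c j\<bar> * (1 / (real n + 2))" .
    qed
    also have "\<dots> = \<bar>c j\<bar> * ((real n + 1) / (real n + 2))" by simp
    also have "\<dots> < \<bar>c j\<bar>" using cj0 by (simp add: field_simps)
    finally show False using cR by simp
  qed
  have inj: "inj_on w {..n}"
  proof (rule inj_onI)
    fix i j assume ij: "i \<in> {..n}" "j \<in> {..n}" "w i = w j"
    show "i = j"
    proof (rule ccontr)
      assume ne: "i \<noteq> j"
      define c where "c k = (if k = i then 1 else 0) - (if k = j then (1::real) else 0)" for k
      have "(\<Sum>k\<le>n. c k *\<^sub>R w k) = (\<Sum>k\<le>n. (if k = i then w k else 0) - (if k = j then w k else 0))"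
        unfolding c_def by (intro sum.cong) (auto simp: scaleR_left_diff_distrib)
      also have "\<dots> = w i - w j" using ij by (simp add: sum_subtractf)
      also have "\<dots> = 0" using ij by simp
      finally have "\<forall>k\<le>n. c k = 0" by (rule fam)
      thus False using ij ne unfolding c_def by auto
    qed
  qed
  have ind: "independent (w ` {..n})"
  proof
    assume "dependent (w ` {..n})"
    then obtain c where c: "\<exists>u\<in>w ` {..n}. c u \<noteq> 0" "(\<Sum>u\<in>w ` {..n}. c u *\<^sub>R u) = 0"
      using real_vector.dependent_finite[of "w ` {..n}"] by auto
    have "(\<Sum>k\<le>n. c (w k) *\<^sub>R w k) = 0" using c(2) by (simp add: sum.reindex[OF inj])
    hence "\<forall>k\<le>n. c (w k) = 0" by (rule fam)
    thus False using c(1) by auto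
  qed
  have "w ` {..n} \<subseteq> span S" using ws by auto
  from independent_span_bound[OF S(1) ind this] have "card (w ` {..n}) \<le> card S" by simp
  moreover have "card (w ` {..n}) = Suc n" using card_image[OF inj] by simp
  ultimately show False using S(2) by simp
qed

lemma Fr_compl_nbhd:
  fixes T :: "'h::real_inner \<Rightarrow>\<^sub>L 'h"
  assumes "T \<notin> Fr n"
  shows "\<exists>N. openin strong_operator_topology N \<and> open N \<and> T \<in> N \<and> N \<inter> Fr n = {}"
proof -
  let ?V = "range (blinfun_apply T)"
  have lin: "linear (blinfun_apply T)" by (simp add: blinfun.bounded_linear_right bounded_linear.linear)
  have V: "subspace ?V" using linear_subspace_image[OF lin subspace_UNIV] .
  have big: "\<not> ?V \<subseteq> span S" if "finite S" "card S \<le> n" for S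
    using assms that unfolding Fr_def by auto
  obtain E where E: "finite E" "card E = Suc n" "E \<subseteq> ?V" "orthonormal_set E"
    using ortho_exists[OF V big] by blast
  obtain h where h: "bij_betw h {0..<Suc n} E" using ex_bij_betw_nat_finite[OF E(1)] E(2) by metis
  have hE: "h i \<in> E" if "i \<le> n" for i using h that unfolding bij_betw_def by auto
  have "\<exists>x. i \<le> n \<longrightarrow> blinfun_apply T x = h i" for i
  proof (cases "i \<le> n")
    case True
    then obtain y where "h i = blinfun_apply T y" using hE[OF True] E(3) by blast
    thus ?thesis by metis
  qed simp
  then obtain x where x: "\<And>i. i \<le> n \<Longrightarrow> blinfun_apply T (x i) = h i" by metis
  have vo: "inner (blinfun_apply T (x i)) (blinfun_apply T (x j)) = (if i = j then 1 else 0)"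
    if "i \<le> n" "j \<le> n" for i j
  proof (cases "i = j")
    case True thus ?thesis using x[OF that(1)] hE[OF that(1)] E(4) unfolding orthonormal_set_def by simp
  next
    case False
    hence "h i \<noteq> h j" using h that unfolding bij_betw_def inj_on_def by auto
    thus ?thesis using x[OF that(1)] x[OF that(2)] hE[OF that(1)] hE[OF that(2)] E(4) False
      unfolding orthonormal_set_def by simp
  qed
  define r where "r = 1 / (real n + 2)"
  have r: "r > 0" unfolding r_def by simp
  define N where "N = {T'. \<forall>i\<in>{..n}. blinfun_apply T' (x i) \<in> ball (blinfun_apply T (x i)) r}"
  have "openin strong_operator_topology N" unfolding N_def
    by (rule strong_operator_topology_basis) auto
  moreover have "open N"
  proof -
    have "N = (\<Inter>i\<in>{..n}. (\<lambda>T'. blinfun_apply T' (x i)) -` ball (blinfun_apply T (x i)) r)"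
      unfolding N_def by auto
    moreover have "open ((\<lambda>T'. blinfun_apply T' (x i)) -` ball (blinfun_apply T (x i)) r)" for i
      by (rule open_vimage) (auto intro: linear_continuous_on bounded_linear_apply_blinfun)
    ultimately show ?thesis by (simp add: open_INT)
  qed
  moreover have "T \<in> N" unfolding N_def using r by simp
  moreover have "N \<inter> Fr n = {}"
  proof (rule ccontr)
    assume "N \<inter> Fr n \<noteq> {}"
    then obtain T' where T': "T' \<in> N" "T' \<in> Fr n" by blast
    obtain S where S: "finite S" "card S \<le> n" "range (blinfun_apply T') \<subseteq> span S"
      using T'(2) unfolding Fr_def by blast
    show False
    proof (rule perturb[of n "\<lambda>i. blinfun_apply T (x i)" "\<lambda>i. blinfun_apply T' (x i)" S])
      show "\<And>i j. i \<le> n \<Longrightarrow> j \<le> n \<Longrightarrow> inner (blinfun_apply T (x i)) (blinfun_apply T (x j)) = (if i = j then 1 else 0)"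
        by (rule vo)
      show "norm (blinfun_apply T' (x i) - blinfun_apply T (x i)) < 1 / (real n + 2)" if "i \<le> n" for i
        using T'(1) that unfolding N_def r_def by (auto simp: dist_norm norm_minus_commute)
      show "blinfun_apply T' (x i) \<in> span S" for i using S(3) by (meson rangeI subsetD)
    qed (use S in auto)
  qed
  ultimately show ?thesis by blast
qed



context
  fixes J :: "'h::{real_inner,banach} \<Rightarrow> 'h"
  assumes cs: "complex_structure J"
begin

lemma Jlin: "linear J" and JJ: "J (J x) = - x" and Jnorm: "norm (J x) = norm x"
  using cs unfolding complex_structure_def by auto

lemma Jadd: "J (x + y) = J x + J y" using Jlin by (rule real_vector.linear_add)
lemma Jscale: "J (c *\<^sub>R x) = c *\<^sub>R J x" using Jlin by (rule real_vector.linear_scale)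

lemma Jinner: "inner (J x) (J y) = inner x y"
proof -
  have a: "inner (J z) (J z) = inner z z" for z
    using Jnorm[of z] by (metis power2_norm_eq_inner)
  have "inner (J x + J y) (J x + J y) = inner (x + y) (x + y)"
    using a[of "x + y"] by (simp add: Jadd)
  thus ?thesis using a[of x] a[of y]
    by (simp add: inner_add_left inner_add_right inner_commute)
qed

lemma Jinner2: "inner (J x) y = - inner x (J y)"
proof -
  have "inner (J x) y = inner (J (J x)) (J y)" by (rule Jinner[symmetric])
  also have "\<dots> = - inner x (J y)" by (simp add: JJ)
  finally show ?thesis .
qed

lemma Jxx: "inner x (J x) = 0"
  using Jinner2[of x x] by (simp add: inner_commute)

lemma cplx_exists:
  assumes inf: "infinite_dimensional TYPE('h)"
  shows "\<exists>B. finite B \<and> card B = k \<and> orthonormal_set B \<and> (\<forall>b\<in>B. \<forall>b'\<in>B. inner b (J b') = 0)"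
proof (induction k)
  case 0
  show ?case by (intro exI[of _ "{}"]) (simp add: orthonormal_set_def)
next
  case (Suc k)
  then obtain B where B: "finite B" "card B = k" "orthonormal_set B" "\<forall>b\<in>B. \<forall>b'\<in>B. inner b (J b') = 0"
    by blast
  define E where "E = B \<union> J ` B"
  have fE: "finite E" unfolding E_def using B(1) by simp
  have B1: "inner b b = 1" if "b \<in> B" for b using B(3) that unfolding orthonormal_set_def by blast
  have B0: "inner b b' = 0" if "b \<in> B" "b' \<in> B" "b \<noteq> b'" for b b'
    using B(3) that unfolding orthonormal_set_def by blast
  have BJ: "inner b (J b') = 0" if "b \<in> B" "b' \<in> B" for b b' using B(4) that by blast
  have oE: "orthonormal_set E"
    unfolding orthonormal_set_def
  proof (intro conjI ballI impI)
    fix e assume "e \<in> E"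
    then consider "e \<in> B" | b where "b \<in> B" "e = J b" unfolding E_def by blast
    thus "inner e e = 1" by cases (simp_all add: B1 Jinner)
  next
    fix e e' assume e: "e \<in> E" and e': "e' \<in> E" and ne: "e \<noteq> e'"
    from e consider "e \<in> B" | b where "b \<in> B" "e = J b" unfolding E_def by blast
    thus "inner e e' = 0"
    proof cases
      case 1
      from e' consider "e' \<in> B" | b' where "b' \<in> B" "e' = J b'" unfolding E_def by blast
      thus ?thesis
      proof cases
        case 1 thus ?thesis using \<open>e \<in> B\<close> ne B0 by blast
      next
        case 2 thus ?thesis using \<open>e \<in> B\<close> BJ by simp
      qed
    next
      case (2 b)
      from e' consider "e' \<in> B" | b' where "b' \<in> B" "e' = J b'" unfolding E_def by blast
      thus ?thesis
      proof cases
        case 1 thus ?thesis using 2 BJ Jinner2 by simp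
      next
        case (2 b')
        hence "b \<noteq> b'" using \<open>e = J b\<close> ne by blast
        thus ?thesis using 2 \<open>b \<in> B\<close> \<open>e = J b\<close> B0 Jinner by simp
      qed
    qed
  qed
  have "span E \<noteq> UNIV" using inf fE unfolding infinite_dimensional_def by blast
  then obtain v where v: "v \<notin> span E" by blast
  obtain w where w: "w \<noteq> 0" "\<forall>e\<in>E. inner w e = 0" using ortho_step[OF fE oE v] by blast
  define e where "e = w /\<^sub>R norm w"
  have ee: "inner e e = 1" unfolding e_def using w(1)
    by (simp add: power2_norm_eq_inner[symmetric] power2_eq_square)
  have eE: "inner e x = 0" if "x \<in> E" for x unfolding e_def using w(2) that by simp
  have eB: "inner e b = 0" if "b \<in> B" for b using eE that unfolding E_def by blast
  have eJB: "inner e (J b) = 0" if "b \<in> B" for b using eE that unfolding E_def by blast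
  have enB: "e \<notin> B" using ee eB by fastforce
  have "orthonormal_set (insert e B)"
    using B(3) ee eB unfolding orthonormal_set_def by (auto simp: inner_commute)
  moreover have "\<forall>b\<in>insert e B. \<forall>b'\<in>insert e B. inner b (J b') = 0"
  proof (intro ballI)
    fix b b' assume b: "b \<in> insert e B" and b': "b' \<in> insert e B"
    show "inner b (J b') = 0"
    proof (cases "b = e")
      case True
      thus ?thesis using b' eJB Jxx by auto
    next
      case False
      hence bB: "b \<in> B" using b by simp
      show ?thesis
      proof (cases "b' = e")
        case True
        have "inner b (J e) = - inner (J b) e" using Jinner2[of b e] by (simp add: inner_commute)
        also have "inner (J b) e = 0" using eJB[OF bB] by (simp add: inner_commute)
        finally show ?thesis using True by simp
      next
        case False
        thus ?thesis using b' bB BJ by simp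
      qed
    qed
  qed
  moreover have "card (insert e B) = Suc k" using B(1,2) enB by simp
  ultimately show ?case using B(1) by (intro exI[of _ "insert e B"]) auto
qed


lemma big_family:
  assumes inf: "infinite_dimensional TYPE('h)"
  shows "\<exists>f::real \<Rightarrow> ('h \<Rightarrow>\<^sub>L 'h). (\<forall>\<alpha>. f \<alpha> \<in> finite_rank_ops J) \<and> (\<forall>\<alpha> \<beta>. \<alpha> \<noteq> \<beta> \<longrightarrow> f \<alpha> - f \<beta> \<notin> Fr N)"
proof -
  obtain B where B: "finite B" "card B = Suc N" "orthonormal_set B" "\<forall>b\<in>B. \<forall>b'\<in>B. inner b (J b') = 0"
    using cplx_exists[OF inf] by blast
  define p where "p x = (\<Sum>b\<in>B. inner x b *\<^sub>R b + inner x (J b) *\<^sub>R J b)" for x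
  have bl: "bounded_linear p" unfolding p_def
    by (intro bounded_linear_sum bounded_linear_add bounded_linear_scaleR_const bounded_linear_inner_left)
  define P where "P = Blinfun p"
  have Pa: "blinfun_apply P = p" unfolding P_def using bl by (simp add: bounded_linear_Blinfun_apply)
  have Jsum: "J (\<Sum>b\<in>B. g b) = (\<Sum>b\<in>B. J (g b))" for g :: "'h \<Rightarrow> 'h"
    using Jlin by (rule real_vector.linear_sum)
  have comm: "p (J x) = J (p x)" for x
  proof -
    have "J (p x) = (\<Sum>b\<in>B. inner x b *\<^sub>R J b + inner x (J b) *\<^sub>R J (J b))"
      unfolding p_def Jsum by (simp add: Jadd Jscale)
    also have "\<dots> = (\<Sum>b\<in>B. inner (J x) b *\<^sub>R b + inner (J x) (J b) *\<^sub>R J b)"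
      by (intro sum.cong refl) (simp add: JJ Jinner Jinner2 algebra_simps)
    finally show ?thesis unfolding p_def by simp
  qed
  have prange: "p x \<in> span (B \<union> J ` B)" for x
    unfolding p_def by (intro span_sum span_add span_scale span_base) auto
  have pfix: "p b0 = b0" if b0: "b0 \<in> B" for b0
  proof -
    have "p b0 = (\<Sum>b\<in>B. if b = b0 then b0 else 0)"
      unfolding p_def
    proof (intro sum.cong refl)
      fix b assume b: "b \<in> B"
      have "inner b0 (J b) = 0" using B(4) b b0 by blast
      moreover have "inner b0 b = (if b = b0 then 1 else 0)"
        using B(3) b b0 unfolding orthonormal_set_def by (auto simp: inner_commute)
      ultimately show "inner b0 b *\<^sub>R b + inner b0 (J b) *\<^sub>R J b = (if b = b0 then b0 else 0)" by simp
    qed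
    also have "\<dots> = b0" using B(1) b0 by simp
    finally show ?thesis .
  qed
  define f where "f \<alpha> = \<alpha> *\<^sub>R P" for \<alpha> :: real
  have "f \<alpha> \<in> finite_rank_ops J" for \<alpha>
    unfolding finite_rank_ops_def bounded_ops_def
  proof (intro CollectI conjI allI exI[of _ "B \<union> J ` B"])
    show "blinfun_apply (f \<alpha>) (J x) = J (blinfun_apply (f \<alpha>) x)" for x
      unfolding f_def by (simp add: blinfun.scaleR_left Pa comm Jscale)
    show "finite (B \<union> J ` B)" using B(1) by simp
    show "range (blinfun_apply (f \<alpha>)) \<subseteq> span (B \<union> J ` B)"
      unfolding f_def using prange by (auto simp: blinfun.scaleR_left Pa intro: span_scale)
  qed
  moreover have "f \<alpha> - f \<beta> \<notin> Fr N" if ne: "\<alpha> \<noteq> \<beta>" for \<alpha> \<beta>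
  proof
    assume "f \<alpha> - f \<beta> \<in> Fr N"
    moreover have "f \<alpha> - f \<beta> = (\<alpha> - \<beta>) *\<^sub>R P" unfolding f_def by (simp add: scaleR_left_diff_distrib)
    ultimately have "P \<in> Fr N" using Fr_scale[of "\<alpha> - \<beta>" P N] ne by simp
    then obtain S where S: "finite S" "card S \<le> N" "range (blinfun_apply P) \<subseteq> span S"
      unfolding Fr_def by blast
    have "B \<subseteq> span S"
    proof
      fix b assume "b \<in> B"
      hence "b = blinfun_apply P b" using pfix Pa by simp
      thus "b \<in> span S" using S(3) by (metis rangeI subsetD)
    qed
    from independent_span_bound[OF S(1) orthonormal_independent[OF B(3)] this]
    have "card B \<le> card S" by simp
    thus False using B(2) S(2) by simp
  qed
  ultimately show ?thesis by (intro exI[of _ f]) blast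
qed

lemma notPol:
  fixes Y :: "('h \<Rightarrow>\<^sub>L 'h) topology"
  assumes inf: "infinite_dimensional TYPE('h)"
    and Y: "topspace Y = finite_rank_ops J" "\<And>n. openin Y (finite_rank_ops J - Fr n)"
  shows "\<not> Polishable (finite_rank_ops J) Y"
proof
  let ?G = "finite_rank_ops J"
  assume "Polishable ?G Y"
  then obtain X where X: "Polish_group_topology ?G X" "borel_sets_of X = borel_sets_of Y"
    unfolding Polishable_def by blast
  have tX: "topspace X = ?G" using X(1) unfolding Polish_group_topology_def by blast
  show False
  proof (rule polish_contra[OF X(1), of Fr])
    fix n
    have "openin Y (?G - Fr n)" by (rule Y(2))
    hence "?G - Fr n \<in> sigma_sets (topspace Y) (Collect (openin Y))" by (intro sigma_sets.Basic) simp
    hence "topspace Y - (?G - Fr n) \<in> sigma_sets (topspace Y) (Collect (openin Y))" by (rule sigma_sets.Compl)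
    moreover have "topspace Y - (?G - Fr n) = Fr n \<inter> ?G" using Y(1) by auto
    ultimately have "Fr n \<inter> ?G \<in> borel_sets_of Y" unfolding borel_sets_of_def by simp
    hence "Fr n \<inter> ?G \<in> borel_sets_of X" using X(2) by simp
    thus "Fr n \<inter> ?G \<in> sigma_sets ?G (Collect (openin X))" unfolding borel_sets_of_def using tX by simp
  next
    show "?G \<subseteq> (\<Union>n. Fr n)" by (rule Fr_cover)
  next
    fix a b and x y :: "'h \<Rightarrow>\<^sub>L 'h"
    assume "x \<in> Fr a" "y \<in> Fr b" thus "x - y \<in> Fr (a + b)" by (rule Fr_diff)
  next
    fix N show "\<exists>f::real \<Rightarrow> _. (\<forall>\<alpha>. f \<alpha> \<in> ?G) \<and> (\<forall>\<alpha> \<beta>. \<alpha> \<noteq> \<beta> \<longrightarrow> f \<alpha> - f \<beta> \<notin> Fr N)"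
      by (rule big_family[OF inf])
  qed
qed

end

lemma sot_open:
  fixes G :: "('h::real_inner \<Rightarrow>\<^sub>L 'h) set"
  shows "openin (subtopology strong_operator_topology G) (G - Fr n)"
    and "openin (subtopology euclidean G) (G - Fr n)"
proof -
  have *: "\<forall>T\<in>G - Fr n. \<exists>U. openin (subtopology strong_operator_topology G) U \<and> T \<in> U \<and> U \<subseteq> G - Fr n"
  proof
    fix T assume T: "T \<in> G - Fr n"
    obtain N where N: "openin strong_operator_topology N" "T \<in> N" "N \<inter> Fr n = {}"
      using Fr_compl_nbhd[of T n] T by blast
    show "\<exists>U. openin (subtopology strong_operator_topology G) U \<and> T \<in> U \<and> U \<subseteq> G - Fr n"
    proof (intro exI[of _ "N \<inter> G"] conjI)
      show "openin (subtopology strong_operator_topology G) (N \<inter> G)" by (rule openin_subtopology_Int[OF N(1)])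
      show "T \<in> N \<inter> G" using N(2) T by blast
      show "N \<inter> G \<subseteq> G - Fr n" using N(3) by blast
    qed
  qed
  show "openin (subtopology strong_operator_topology G) (G - Fr n)" by (subst openin_subopen) (rule *)
  have **: "\<forall>T\<in>G - Fr n. \<exists>U. openin (subtopology euclidean G) U \<and> T \<in> U \<and> U \<subseteq> G - Fr n"
  proof
    fix T assume T: "T \<in> G - Fr n"
    obtain N where N: "open N" "T \<in> N" "N \<inter> Fr n = {}"
      using Fr_compl_nbhd[of T n] T by blast
    have No: "openin euclidean N" using N(1) by simp
    show "\<exists>U. openin (subtopology euclidean G) U \<and> T \<in> U \<and> U \<subseteq> G - Fr n"
    proof (intro exI[of _ "N \<inter> G"] conjI)
      show "openin (subtopology euclidean G) (N \<inter> G)" by (rule openin_subtopology_Int[OF No])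
      show "T \<in> N \<inter> G" using N(2) T by blast
      show "N \<inter> G \<subseteq> G - Fr n" using N(3) by blast
    qed
  qed
  show "openin (subtopology euclidean G) (G - Fr n)" by (subst openin_subopen) (rule **)
qed

theorem mainTheorem11:
  fixes J :: "'h::{real_inner,banach} \<Rightarrow> 'h"
  assumes "complex_structure J"
    and "infinite_dimensional TYPE('h)"
    and "separable_type TYPE('h)"
  shows "\<not> Polishable (finite_rank_ops J) (subtopology euclidean (finite_rank_ops J))
       \<and> \<not> Polishable (finite_rank_ops J) (subtopology strong_operator_topology (finite_rank_ops J))"
proof
  show "\<not> Polishable (finite_rank_ops J) (subtopology euclidean (finite_rank_ops J))"
  proof (rule notPol[OF assms(1) assms(2)])
    show "topspace (subtopology euclidean (finite_rank_ops J)) = finite_rank_ops J" by simp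
    fix n show "openin (subtopology euclidean (finite_rank_ops J)) (finite_rank_ops J - Fr n)"
      by (rule sot_open(2))
  qed
  show "\<not> Polishable (finite_rank_ops J) (subtopology strong_operator_topology (finite_rank_ops J))"
  proof (rule notPol[OF assms(1) assms(2)])
    show "topspace (subtopology strong_operator_topology (finite_rank_ops J)) = finite_rank_ops J"
      by (simp add: strong_operator_topology_topspace)
    fix n show "openin (subtopology strong_operator_topology (finite_rank_ops J)) (finite_rank_ops J - Fr n)"
      by (rule sot_open(1))
  qed
qed


end
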